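(* If an invariant state $\rho$ is supported on $\Omega=\{|-\rangle,|+\rangle,\varphi_{0_1},\varphi_{0_N}\}^\perp$, then $\rho$ is supported on $V$.
   Context: Fix integers $N\ge 2$ and $n_1\ge n_2\ge\dots\ge n_N\ge 1$. Let $\mathcal H$ be a finite-dimensional complex Hilbert space with orthonormal basis $\{|-\rangle,|+\rangle\}\cup\{|a_k\rangle:1\le k\le N,\ 0\le a\le n_k-1\}$. For vectors $x,y$, $|x\rangle\langle y|$ denotes the operator $u\mapsto\langle y,u\rangle x$. Put $E_k=\mathrm{span}\{|a_k\rangle:0\le a\le n_k-1\}$, $P_k$ the orthogonal projection onto $E_k$, $P_\pm=|\pm\rangle\langle\pm|$, $\zeta_k=e^{2\pi i/n_k}$, and $\varphi_{a_k}=n_k^{-1/2}\sum_{b=0}^{n_k-1}\zeta_k^{-ba}|b_k\rangle$ for $0\le a\le n_k-1$. For $1\le k\le N-1$ let $Z_k=n_k^{-1/2}\sum_{b=0}^{n_{k+1}-1}\sum_{a=0}^{n_k-1}\zeta_k^{ba}|b_{k+1}\rangle\langle a_k|$ (an operator on $\mathcal H$), $|Z|_k=Z_k^*Z_k$. The transport operator is $Z=\sum_{k=1}^{N-1}Z_k$. Let $\omega$ range over the set $\{\omega_+,\omega_-,\omega_1,\dots,\omega_{N-1}\}$ of (distinct) Bohr frequencies, and let $\Gamma_{\pm,\omega}>0$, $\gamma_{\pm,\omega}\in\mathbb R$ be constants. Kraus operators: $L_{-,\omega_+}=\sqrt{n_1\Gamma_{-,\omega_+}}|\varphi_{0_1}\rangle\langle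 +|$, $L_{+,\omega_+}=\sqrt{n_1\Gamma_{+,\omega_+}}|+\rangle\langle\varphi_{0_1}|$, $L_{-,\omega_k}=\sqrt{\Gamma_{-,\omega_k}}Z_k$, $L_{+,\omega_k}=\sqrt{\Gamma_{+,\omega_k}}Z_k^*$ ($1\le k\le N-1$), $L_{-,\omega_-}=\sqrt{\Gamma_{-,\omega_-}}|-\rangle\langle\varphi_{0_N}|$, $L_{+,\omega_-}=0$. Effective Hamiltonian $H_{\mathrm{eff}}=n_1\gamma_{-,\omega_+}P_+-n_1\gamma_{+,\omega_+}|\varphi_{0_1}\rangle\langle\varphi_{0_1}|+\gamma_{-,\omega_-}|\varphi_{0_N}\rangle\langle\varphi_{0_N}|-\gamma_{+,\omega_-}P_-+\sum_{k=1}^{N-1}(\gamma_{-,\omega_k}|Z|_k-\gamma_{+,\omega_k}P_{k+1})$. The generator is $\mathcal L(\rho)=-i[H_{\mathrm{eff}},\rho]+\sum_{\omega}\sum_{\epsilon=\pm}\big(L_{\epsilon,\omega}\rho L_{\epsilon,\omega}^*-\tfrac12\{L_{\epsilon,\omega}^*L_{\epsilon,\omega},\rho\}\big)$. A state is a positive operator of trace one; it is invariant if $\mathcal L(\rho)=0$; an operator is supported on a subspace $E$ if its range is contained in $E$. $V$ is the orthogonal complement of the set $\{|-\rangle,|+\rangle,Z^n\varphi_{0_1},Z^{*n}\varphi_{0_N},Z^{*s}\varphi_{0_{2m+1}}:0\le n\le N-1,\ 1\le m\le (N-1)/2,\ 1\le s\le 2m\}$. *)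

theory Defs
  imports Complex_Main
begin

text \<open>Basis labels: KMinus = |->, KPlus = |+>, Site k a = |a_k> (1 <= k <= N, a < n k).
  Vectors are functions idx => complex vanishing off the basis,
  operators are matrices idx => idx => complex vanishing off basis x basis.\<close>

datatype idx = KMinus | KPlus | Site nat nat

datatype sign = SMinus | SPlus

datatype freq = WPlus | WMinus | Wk nat

type_synonym vec = "idx \<Rightarrow> complex"
type_synonym op = "idx \<Rightarrow> idx \<Rightarrow> complex"

definition basis :: "nat \<Rightarrow> (nat \<Rightarrow> nat) \<Rightarrow> idx set" where
  "basis N n = {KMinus, KPlus} \<union> {Site k a | k a. 1 \<le> k \<and> k \<le> N \<and> a < n k}"

definition hspace :: "nat \<Rightarrow> (nat \<Rightarrow> nat) \<Rightarrow> vec set" where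
  "hspace N n = {x. \<forall>i. i \<notin> basis N n \<longrightarrow> x i = 0}"

definition is_operator :: "nat \<Rightarrow> (nat \<Rightarrow> nat) \<Rightarrow> op \<Rightarrow> bool" where
  "is_operator N n A \<longleftrightarrow> (\<forall>i j. (i \<notin> basis N n \<or> j \<notin> basis N n) \<longrightarrow> A i j = 0)"

definition inner_h :: "nat \<Rightarrow> (nat \<Rightarrow> nat) \<Rightarrow> vec \<Rightarrow> vec \<Rightarrow> complex" where
  "inner_h N n x y = (\<Sum>i\<in>basis N n. cnj (x i) * y i)"

definition app :: "nat \<Rightarrow> (nat \<Rightarrow> nat) \<Rightarrow> op \<Rightarrow> vec \<Rightarrow> vec" where
  "app N n A x = (\<lambda>i. \<Sum>j\<in>basis N n. A i j * x j)"

definition mmul :: "nat \<Rightarrow> (nat \<Rightarrow> nat) \<Rightarrow> op \<Rightarrow> op \<Rightarrow> op" where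
  "mmul N n A C = (\<lambda>i j. \<Sum>l\<in>basis N n. A i l * C l j)"

definition adj :: "op \<Rightarrow> op" where
  "adj A = (\<lambda>i j. cnj (A j i))"

definition outer :: "vec \<Rightarrow> vec \<Rightarrow> op" where
  "outer x y = (\<lambda>i j. x i * cnj (y j))"

definition ket :: "idx \<Rightarrow> vec" where
  "ket i = (\<lambda>j. if j = i then 1 else 0)"

definition zeta :: "(nat \<Rightarrow> nat) \<Rightarrow> nat \<Rightarrow> complex" where
  "zeta n k = cis (2 * pi / real (n k))"

definition phi :: "nat \<Rightarrow> (nat \<Rightarrow> nat) \<Rightarrow> nat \<Rightarrow> nat \<Rightarrow> vec" where
  "phi N n k a = (\<lambda>i. case i of
      Site k' b \<Rightarrow> if k' = k \<and> Site k' b \<in> basis N n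
                   then inverse (zeta n k) ^ (b * a) / complex_of_real (sqrt (real (n k)))
                   else 0
    | _ \<Rightarrow> 0)"

definition Zk :: "nat \<Rightarrow> (nat \<Rightarrow> nat) \<Rightarrow> nat \<Rightarrow> op" where
  "Zk N n k = (\<lambda>i j. case (i, j) of
      (Site k1 b, Site k0 a) \<Rightarrow>
         if k1 = k + 1 \<and> k0 = k \<and> Site k1 b \<in> basis N n \<and> Site k0 a \<in> basis N n
         then zeta n k ^ (b * a) / complex_of_real (sqrt (real (n k)))
         else 0
    | _ \<Rightarrow> 0)"

definition absZk :: "nat \<Rightarrow> (nat \<Rightarrow> nat) \<Rightarrow> nat \<Rightarrow> op" where
  "absZk N n k = mmul N n (adj (Zk N n k)) (Zk N n k)"

definition Ztr :: "nat \<Rightarrow> (nat \<Rightarrow> nat) \<Rightarrow> op" where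
  "Ztr N n = (\<lambda>i j. \<Sum>k\<in>{1..N-1}. Zk N n k i j)"

definition Pk :: "nat \<Rightarrow> (nat \<Rightarrow> nat) \<Rightarrow> nat \<Rightarrow> op" where
  "Pk N n k = (\<lambda>i j. if i = j \<and> (\<exists>a. i = Site k a \<and> a < n k) \<and> i \<in> basis N n then 1 else 0)"

definition Heff :: "nat \<Rightarrow> (nat \<Rightarrow> nat) \<Rightarrow> (sign \<Rightarrow> freq \<Rightarrow> real) \<Rightarrow> op" where
  "Heff N n g = (\<lambda>i j.
       complex_of_real (real (n 1) * g SMinus WPlus) * outer (ket KPlus) (ket KPlus) i j
     - complex_of_real (real (n 1) * g SPlus WPlus) * outer (phi N n 1 0) (phi N n 1 0) i j
     + complex_of_real (g SMinus WMinus) * outer (phi N n N 0) (phi N n N 0) i j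
     - complex_of_real (g SPlus WMinus) * outer (ket KMinus) (ket KMinus) i j
     + (\<Sum>k\<in>{1..N-1}. complex_of_real (g SMinus (Wk k)) * absZk N n k i j
                      - complex_of_real (g SPlus (Wk k)) * Pk N n (k + 1) i j))"

definition csqrt_r :: "real \<Rightarrow> complex" where
  "csqrt_r x = complex_of_real (sqrt x)"

definition kraus :: "nat \<Rightarrow> (nat \<Rightarrow> nat) \<Rightarrow> (sign \<Rightarrow> freq \<Rightarrow> real) \<Rightarrow> sign \<Rightarrow> freq \<Rightarrow> op" where
  "kraus N n G e w = (case (e, w) of
      (SMinus, WPlus) \<Rightarrow> (\<lambda>i j. csqrt_r (real (n 1) * G SMinus WPlus) * outer (phi N n 1 0) (ket KPlus) i j)
    | (SPlus, WPlus) \<Rightarrow> (\<lambda>i j. csqrt_r (real (n 1) * G SPlus WPlus) * outer (ket KPlus) (phi N n 1 0) i j)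
    | (SMinus, Wk k) \<Rightarrow> (\<lambda>i j. csqrt_r (G SMinus (Wk k)) * Zk N n k i j)
    | (SPlus, Wk k) \<Rightarrow> (\<lambda>i j. csqrt_r (G SPlus (Wk k)) * adj (Zk N n k) i j)
    | (SMinus, WMinus) \<Rightarrow> (\<lambda>i j. csqrt_r (G SMinus WMinus) * outer (ket KMinus) (phi N n N 0) i j)
    | (SPlus, WMinus) \<Rightarrow> (\<lambda>i j. 0))"

definition freqs :: "nat \<Rightarrow> freq set" where
  "freqs N = {WPlus, WMinus} \<union> Wk ` {1..N-1}"

definition dissip :: "nat \<Rightarrow> (nat \<Rightarrow> nat) \<Rightarrow> op \<Rightarrow> op \<Rightarrow> op" where
  "dissip N n L \<rho> = (\<lambda>i j.
      mmul N n (mmul N n L \<rho>) (adj L) i j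
    - (1/2) * (mmul N n (mmul N n (adj L) L) \<rho> i j + mmul N n \<rho> (mmul N n (adj L) L) i j))"

definition generator :: "nat \<Rightarrow> (nat \<Rightarrow> nat) \<Rightarrow> (sign \<Rightarrow> freq \<Rightarrow> real) \<Rightarrow> (sign \<Rightarrow> freq \<Rightarrow> real) \<Rightarrow> op \<Rightarrow> op" where
  "generator N n G g \<rho> = (\<lambda>i j.
      - \<i> * (mmul N n (Heff N n g) \<rho> i j - mmul N n \<rho> (Heff N n g) i j)
    + (\<Sum>w\<in>freqs N. \<Sum>e\<in>{SMinus, SPlus}. dissip N n (kraus N n G e w) \<rho> i j))"

definition is_state :: "nat \<Rightarrow> (nat \<Rightarrow> nat) \<Rightarrow> op \<Rightarrow> bool" where
  "is_state N n \<rho> \<longleftrightarrow> is_operator N n \<rho>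
     \<and> (\<forall>x \<in> hspace N n. inner_h N n x (app N n \<rho> x) \<in> \<real> \<and> 0 \<le> Re (inner_h N n x (app N n \<rho> x)))
     \<and> (\<Sum>i\<in>basis N n. \<rho> i i) = 1"

definition invariant :: "nat \<Rightarrow> (nat \<Rightarrow> nat) \<Rightarrow> (sign \<Rightarrow> freq \<Rightarrow> real) \<Rightarrow> (sign \<Rightarrow> freq \<Rightarrow> real) \<Rightarrow> op \<Rightarrow> bool" where
  "invariant N n G g \<rho> \<longleftrightarrow> generator N n G g \<rho> = (\<lambda>i j. 0)"

definition perp :: "nat \<Rightarrow> (nat \<Rightarrow> nat) \<Rightarrow> vec set \<Rightarrow> vec set" where
  "perp N n S = {y \<in> hspace N n. \<forall>s\<in>S. inner_h N n s y = 0}"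

definition supported_on :: "nat \<Rightarrow> (nat \<Rightarrow> nat) \<Rightarrow> op \<Rightarrow> vec set \<Rightarrow> bool" where
  "supported_on N n A E \<longleftrightarrow> (\<forall>x \<in> hspace N n. app N n A x \<in> E)"

definition Omega :: "nat \<Rightarrow> (nat \<Rightarrow> nat) \<Rightarrow> vec set" where
  "Omega N n = perp N n {ket KMinus, ket KPlus, phi N n 1 0, phi N n N 0}"

definition Vsp :: "nat \<Rightarrow> (nat \<Rightarrow> nat) \<Rightarrow> vec set" where
  "Vsp N n = perp N n (
       {(app N n (Ztr N n) ^^ m) (phi N n 1 0) | m. m \<le> N - 1}
     \<union> {(app N n (adj (Ztr N n)) ^^ m) (phi N n N 0) | m. m \<le> N - 1}
     \<union> {(app N n (adj (Ztr N n)) ^^ s) (phi N n (2 * m + 1) 0) | m s.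
           1 \<le> m \<and> 2 * m + 1 \<le> N \<and> 1 \<le> s \<and> s \<le> 2 * m})"

end

theory Submission
  imports Defs
begin

lemma fin_basis[simp]: "finite (basis N n)"
proof -
  have "basis N n \<subseteq> {KMinus, KPlus} \<union> (\<lambda>(k,a). Site k a) ` (SIGMA k:{1..N}. {..<n k})"
    unfolding basis_def by auto
  moreover have "finite ({KMinus, KPlus} \<union> (\<lambda>(k,a). Site k a) ` (SIGMA k:{1..N}. {..<n k}))"
    by auto
  ultimately show ?thesis by (rule finite_subset)
qed

lemma inner_ket_right: "j \<in> basis N n \<Longrightarrow> inner_h N n x (ket j) = cnj (x j)"
  unfolding inner_h_def ket_def by (simp add: if_distrib cong: if_cong)

lemma inner_ket_left: "j \<in> basis N n \<Longrightarrow> inner_h N n (ket j) x = x j"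
proof -
  assume j: "j \<in> basis N n"
  have "\<And>i. cnj (ket j i) * x i = (if i = j then x i else 0)" unfolding ket_def by simp
  then show ?thesis unfolding inner_h_def using j by simp
qed

lemma app_ket: "j \<in> basis N n \<Longrightarrow> app N n A (ket j) i = A i j"
  unfolding app_def ket_def by (simp add: if_distrib cong: if_cong)

lemma inner_app_adj: "inner_h N n x (app N n A y) = inner_h N n (app N n (adj A) x) y"
proof -
  have "inner_h N n x (app N n A y) = (\<Sum>i\<in>basis N n. \<Sum>j\<in>basis N n. cnj (x i) * A i j * y j)"
    unfolding inner_h_def app_def by (simp add: sum_distrib_left mult.assoc)
  also have "\<dots> = (\<Sum>j\<in>basis N n. \<Sum>i\<in>basis N n. cnj (x i) * A i j * y j)"
    by (rule sum.swap)
  also have "\<dots> = inner_h N n (app N n (adj A) x) y"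
    unfolding inner_h_def app_def adj_def by (simp add: sum_distrib_left mult_ac)
  finally show ?thesis .
qed

lemma app_mmul: "app N n (mmul N n A C) x = app N n A (app N n C x)"
proof
  fix i
  have "app N n (mmul N n A C) x i = (\<Sum>j\<in>basis N n. \<Sum>l\<in>basis N n. A i l * C l j * x j)"
    unfolding app_def mmul_def by (simp add: sum_distrib_right)
  also have "\<dots> = (\<Sum>l\<in>basis N n. \<Sum>j\<in>basis N n. A i l * C l j * x j)"
    by (rule sum.swap)
  also have "\<dots> = app N n A (app N n C x) i"
    unfolding app_def by (simp add: sum_distrib_left mult.assoc)
  finally show "app N n (mmul N n A C) x i = app N n A (app N n C x) i" .
qed

definition herm :: "nat \<Rightarrow> (nat \<Rightarrow> nat) \<Rightarrow> op \<Rightarrow> bool" where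
  "herm N n r \<longleftrightarrow> (\<forall>i\<in>basis N n. \<forall>j\<in>basis N n. r j i = cnj (r i j))"

definition kerv :: "nat \<Rightarrow> (nat \<Rightarrow> nat) \<Rightarrow> op \<Rightarrow> vec \<Rightarrow> bool" where
  "kerv N n r v \<longleftrightarrow> (\<forall>i\<in>basis N n. app N n r v i = 0)"

lemma app_cong: "(\<And>j. j \<in> basis N n \<Longrightarrow> x j = y j) \<Longrightarrow> app N n A x = app N n A y"
  unfolding app_def by (rule ext) (rule sum.cong, auto)

lemma inner_cong: "(\<And>j. j \<in> basis N n \<Longrightarrow> x j = x' j) \<Longrightarrow> (\<And>j. j \<in> basis N n \<Longrightarrow> y j = y' j)
  \<Longrightarrow> inner_h N n x y = inner_h N n x' y'"
  unfolding inner_h_def by (rule sum.cong, auto)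

lemma app_lin: "app N n A (\<lambda>j. x j + c * y j) i = app N n A x i + c * app N n A y i"
  unfolding app_def by (simp add: sum.distrib sum_distrib_left algebra_simps)

lemma app_scale: "app N n A (\<lambda>j. c * y j) i = c * app N n A y i"
  unfolding app_def by (simp add: sum_distrib_left algebra_simps)

lemma app_zero: "app N n A (\<lambda>j. 0) = (\<lambda>i. 0)"
  unfolding app_def by simp

lemma inner_lin_right: "inner_h N n z (\<lambda>j. x j + c * y j) = inner_h N n z x + c * inner_h N n z y"
  unfolding inner_h_def by (simp add: sum.distrib sum_distrib_left algebra_simps)

lemma inner_lin_left: "inner_h N n (\<lambda>j. x j + c * y j) z = inner_h N n x z + cnj c * inner_h N n y z"
  unfolding inner_h_def by (simp add: sum.distrib sum_distrib_left algebra_simps)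

lemma app_adj_herm: "herm N n r \<Longrightarrow> i \<in> basis N n \<Longrightarrow> app N n (adj r) x i = app N n r x i"
  unfolding app_def adj_def
proof (intro sum.cong refl)
  fix j assume "herm N n r" "i \<in> basis N n" "j \<in> basis N n"
  then have "r i j = cnj (r j i)" unfolding herm_def by (metis complex_cnj_cnj)
  then show "cnj (r j i) * x j = r i j * x j" by simp
qed

lemma kerv_inner: assumes "herm N n r" "kerv N n r v" shows "inner_h N n v (app N n r y) = 0"
proof -
  have "inner_h N n v (app N n r y) = inner_h N n (app N n (adj r) v) y" by (rule inner_app_adj)
  also have "\<dots> = inner_h N n (\<lambda>i. 0) y"
    by (rule inner_cong) (use assms in \<open>auto simp: app_adj_herm kerv_def\<close>)
  also have "\<dots> = 0" unfolding inner_h_def by simp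
  finally show ?thesis .
qed

lemma ket_hspace: "j \<in> basis N n \<Longrightarrow> ket j \<in> hspace N n"
  unfolding hspace_def ket_def by auto

lemma kerv_of_perp: assumes "herm N n r" "\<And>x. x \<in> hspace N n \<Longrightarrow> inner_h N n s (app N n r x) = 0"
  shows "kerv N n r s"
  unfolding kerv_def
proof
  fix j assume j: "j \<in> basis N n"
  have "0 = inner_h N n s (app N n r (ket j))" using assms(2) ket_hspace[OF j] by simp
  also have "\<dots> = inner_h N n (app N n (adj r) s) (ket j)" by (rule inner_app_adj)
  also have "\<dots> = cnj (app N n r s j)" using j assms(1) by (simp add: inner_ket_right app_adj_herm)
  finally show "app N n r s j = 0" by simp
qed

lemma psd_all:
  assumes "is_state N n r"
  shows "inner_h N n x (app N n r x) \<in> \<real> \<and> 0 \<le> Re (inner_h N n x (app N n r x))"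
proof -
  define x' where "x' = (\<lambda>i. if i \<in> basis N n then x i else 0)"
  have h: "x' \<in> hspace N n" unfolding x'_def hspace_def by auto
  have "app N n r x' = app N n r x" by (rule app_cong) (simp add: x'_def)
  moreover have "inner_h N n x' (app N n r x) = inner_h N n x (app N n r x)"
    by (rule inner_cong) (auto simp: x'_def)
  ultimately show ?thesis using assms h unfolding is_state_def by metis
qed

lemma app_lin': "app N n A (\<lambda>j. x j + c * y j) = (\<lambda>i. app N n A x i + c * app N n A y i)"
  by (rule ext) (rule app_lin)

lemma quad_expand:
  "inner_h N n (\<lambda>l. x l + c * y l) (app N n A (\<lambda>l. x l + c * y l))
   = inner_h N n x (app N n A x) + c * inner_h N n x (app N n A y)
     + cnj c * (inner_h N n y (app N n A x) + c * inner_h N n y (app N n A y))"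
  by (simp add: app_lin' inner_lin_left inner_lin_right)

lemma herm_of_state: assumes "is_state N n r" shows "herm N n r"
  unfolding herm_def
proof (intro ballI)
  fix i j assume i: "i \<in> basis N n" and j: "j \<in> basis N n"
  have q: "inner_h N n (\<lambda>l. ket i l + c * ket j l) (app N n r (\<lambda>l. ket i l + c * ket j l))
     = r i i + c * r i j + cnj c * (r j i + c * r j j)" for c
    by (simp add: quad_expand inner_ket_left app_ket i j)
  have r1: "r i i \<in> \<real>" using psd_all[OF assms, of "ket i"] by (simp add: inner_ket_left app_ket i)
  have r2: "r j j \<in> \<real>" using psd_all[OF assms, of "ket j"] by (simp add: inner_ket_left app_ket j)
  have r3: "r i i + 1 * r i j + cnj 1 * (r j i + 1 * r j j) \<in> \<real>"
    using psd_all[OF assms, of "\<lambda>l. ket i l + 1 * ket j l"] q[of 1] by simp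
  have r4: "r i i + \<i> * r i j + cnj \<i> * (r j i + \<i> * r j j) \<in> \<real>"
    using psd_all[OF assms, of "\<lambda>l. ket i l + \<i> * ket j l"] q[of "\<i>"] by simp
  show "r j i = cnj (r i j)"
    using r1 r2 r3 r4 by (auto simp: complex_eq_iff complex_is_Real_iff)
qed

lemma psd_zero:
  assumes st: "is_state N n r" and z: "inner_h N n u (app N n r u) = 0"
  shows "kerv N n r u"
  unfolding kerv_def
proof
  fix i assume i: "i \<in> basis N n"
  have h: "herm N n r" by (rule herm_of_state[OF st])
  define a where "a = app N n r u i"
  define b where "b = r i i"
  have breal: "b \<in> \<real>" and bpos: "0 \<le> Re b"
    using psd_all[OF st, of "ket i"] by (simp_all add: inner_ket_left app_ket i b_def)
  have ua: "inner_h N n u (app N n r (ket i)) = cnj a"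
    unfolding a_def by (simp add: inner_app_adj inner_ket_right i app_adj_herm[OF h])
  have q: "inner_h N n (\<lambda>l. u l + c * ket i l) (app N n r (\<lambda>l. u l + c * ket i l))
     = c * cnj a + cnj c * (a + c * b)" for c
    by (simp add: quad_expand z ua inner_ket_left app_ket i a_def b_def)
  define t where "t = 1 / (Re b + 1)"
  have tpos: "t > 0" using bpos by (simp add: t_def)
  have tb: "t * Re b < 1" using bpos by (simp add: t_def field_simps)
  define c where "c = - complex_of_real t * a"
  have "0 \<le> Re (c * cnj a + cnj c * (a + c * b))"
    using psd_all[OF st, of "\<lambda>l. u l + c * ket i l"] q[of c] by simp
  moreover have "Re (c * cnj a + cnj c * (a + c * b)) = t * ((Re a)^2 + (Im a)^2) * (t * Re b - 2)"
    using breal unfolding c_def by (auto simp: complex_is_Real_iff algebra_simps power2_eq_square)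
  ultimately have "0 \<le> t * ((Re a)^2 + (Im a)^2) * (t * Re b - 2)" by simp
  moreover have "t * Re b - 2 < 0" using tb by simp
  ultimately have "t * ((Re a)^2 + (Im a)^2) \<le> 0"
    by (simp add: mult_le_0_iff zero_le_mult_iff)
  then have "(Re a)^2 + (Im a)^2 \<le> 0" using tpos by (simp add: mult_le_0_iff)
  then have "a = 0" by (simp add: complex_eq_iff) (smt (verit) sum_power2_le_zero_iff)
  then show "app N n r u i = 0" by (simp add: a_def)
qed

lemma Q_add: "inner_h N n v (app N n (\<lambda>i j. A i j + C i j) v) = inner_h N n v (app N n A v) + inner_h N n v (app N n C v)"
  unfolding inner_h_def app_def by (simp add: sum.distrib algebra_simps)

lemma Q_diff: "inner_h N n v (app N n (\<lambda>i j. A i j - C i j) v) = inner_h N n v (app N n A v) - inner_h N n v (app N n C v)"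
  unfolding inner_h_def app_def by (simp add: sum_subtractf algebra_simps)

lemma Q_scale: "inner_h N n v (app N n (\<lambda>i j. c * A i j) v) = c * inner_h N n v (app N n A v)"
  unfolding inner_h_def app_def by (simp add: sum_distrib_left algebra_simps)

lemma Q_sum: "inner_h N n v (app N n (\<lambda>i j. \<Sum>w\<in>W. F w i j) v) = (\<Sum>w\<in>W. inner_h N n v (app N n (F w) v))"
proof -
  have "inner_h N n v (app N n (\<lambda>i j. \<Sum>w\<in>W. F w i j) v)
      = (\<Sum>i\<in>basis N n. \<Sum>j\<in>basis N n. \<Sum>w\<in>W. cnj (v i) * F w i j * v j)"
    unfolding inner_h_def app_def by (simp add: sum_distrib_left sum_distrib_right mult.assoc)
  also have "\<dots> = (\<Sum>i\<in>basis N n. \<Sum>w\<in>W. \<Sum>j\<in>basis N n. cnj (v i) * F w i j * v j)"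
    by (rule sum.cong[OF refl], rule sum.swap)
  also have "\<dots> = (\<Sum>w\<in>W. \<Sum>i\<in>basis N n. \<Sum>j\<in>basis N n. cnj (v i) * F w i j * v j)"
    by (rule sum.swap)
  also have "\<dots> = (\<Sum>w\<in>W. inner_h N n v (app N n (F w) v))"
    unfolding inner_h_def app_def by (simp add: sum_distrib_left mult.assoc)
  finally show ?thesis .
qed

lemma inner_zero_right: "inner_h N n x (\<lambda>i. 0) = 0"
  unfolding inner_h_def by simp

lemma kerv_app_zero: "kerv N n r v \<Longrightarrow> app N n A (app N n r v) = (\<lambda>i. 0)"
  unfolding kerv_def app_def by (rule ext) (simp)

lemma key:
  assumes st: "is_state N n r" and inv: "invariant N n G g r" and kv: "kerv N n r v"
    and w: "w \<in> freqs N" and e: "e \<in> {SMinus, SPlus}"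
  shows "kerv N n r (app N n (adj (kraus N n G e w)) v)"
proof -
  have h: "herm N n r" by (rule herm_of_state[OF st])
  define u where "u = (\<lambda>e w. app N n (adj (kraus N n G e w)) v)"
  define R where "R = (\<lambda>e w. inner_h N n (u e w) (app N n r (u e w)))"
  have Rr: "R e w \<in> \<real> \<and> 0 \<le> Re (R e w)" for e w unfolding R_def by (rule psd_all[OF st])
  have D: "inner_h N n v (app N n (dissip N n L r) v) = inner_h N n (app N n (adj L) v) (app N n r (app N n (adj L) v))" for L
  proof -
    have "inner_h N n v (app N n (dissip N n L r) v)
      = inner_h N n v (app N n (mmul N n (mmul N n L r) (adj L)) v)
        - 1/2 * (inner_h N n v (app N n (mmul N n (mmul N n (adj L) L) r) v)
               + inner_h N n v (app N n (mmul N n r (mmul N n (adj L) L)) v))"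
      unfolding dissip_def by (simp only: Q_diff Q_scale Q_add)
    also have "\<dots> = inner_h N n v (app N n L (app N n r (app N n (adj L) v)))"
      by (simp add: app_mmul kerv_app_zero[OF kv] app_zero kerv_inner[OF h kv] inner_zero_right)
    also have "\<dots> = inner_h N n (app N n (adj L) v) (app N n r (app N n (adj L) v))"
      by (rule inner_app_adj)
    finally show ?thesis .
  qed
  have "0 = inner_h N n v (app N n (generator N n G g r) v)"
    using inv unfolding invariant_def by (simp add: inner_h_def app_def)
  also have "\<dots> = - \<i> * (inner_h N n v (app N n (mmul N n (Heff N n g) r) v) - inner_h N n v (app N n (mmul N n r (Heff N n g)) v))
     + (\<Sum>w\<in>freqs N. \<Sum>e\<in>{SMinus, SPlus}. inner_h N n v (app N n (dissip N n (kraus N n G e w) r) v))"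
    unfolding generator_def by (simp only: Q_diff Q_scale Q_add Q_sum)
  also have "\<dots> = (\<Sum>w\<in>freqs N. \<Sum>e\<in>{SMinus, SPlus}. R e w)"
    unfolding R_def u_def D
    by (simp add: app_mmul kerv_app_zero[OF kv] app_zero kerv_inner[OF h kv] inner_zero_right)
  finally have S: "(\<Sum>w\<in>freqs N. \<Sum>e\<in>{SMinus, SPlus}. R e w) = 0" by simp
  have fin: "finite (freqs N)" unfolding freqs_def by simp
  have "(\<Sum>w\<in>freqs N. \<Sum>e\<in>{SMinus, SPlus}. Re (R e w)) = 0"
    using arg_cong[OF S, of Re] by (simp add: Re_sum)
  then have "\<forall>w\<in>freqs N. (\<Sum>e\<in>{SMinus, SPlus}. Re (R e w)) = 0"
    using fin Rr by (subst sum_nonneg_eq_0_iff[symmetric]) (auto intro!: sum_nonneg)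
  then have sw: "Re (R SMinus w) + Re (R SPlus w) = 0" using w by simp
  have "0 \<le> Re (R SMinus w)" "0 \<le> Re (R SPlus w)" using Rr by auto
  then have "Re (R e w) = 0" using sw e by auto
  then have "R e w = 0" using Rr[of e w] by (simp add: complex_eq_iff complex_is_Real_iff)
  then show ?thesis using psd_zero[OF st] unfolding R_def u_def by blast
qed

lemma root_sum:
  assumes m: "m > 0" and b: "b < m"
  shows "(\<Sum>a<m. cis (2 * pi / real m) ^ (b * a)) = (if b = 0 then of_nat m else 0)"
proof (cases "b = 0")
  case True then show ?thesis by simp
next
  case False
  define x where "x = cis (2 * pi / real m) ^ b"
  have x: "x = cis (real b * (2 * pi / real m))" unfolding x_def by (rule DeMoivre)
  have xm: "x ^ m = 1"
  proof -
    have "x ^ m = cis (real m * (real b * (2 * pi / real m)))" unfolding x by (rule DeMoivre)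
    also have "real m * (real b * (2 * pi / real m)) = 2 * pi * real b" using m by simp
    also have "cis (2 * pi * real b) = 1" by (rule cis_multiple_2pi) simp
    finally show ?thesis .
  qed
  have x1: "x \<noteq> 1"
  proof
    assume x1: "x = 1"
    have "cos (real b * (2 * pi / real m)) = Re x" unfolding x by (simp only: cis.sel)
    then have "cos (real b * (2 * pi / real m)) = 1" using x1 by simp
    then obtain k :: int where k: "real b * (2 * pi / real m) = real_of_int k * 2 * pi" using cos_one_2pi_int by auto
    then have "real b = real_of_int k * real m" using m by (simp add: field_simps)
    then have "int b = k * int m" by (metis of_int_eq_iff of_int_mult of_int_of_nat_eq)
    moreover have "0 < int b" "int b < int m" using False b by auto
    ultimately show False
    proof (cases "k \<le> 0")
      case True
      then have "k * int m \<le> 0" by (simp add: mult_nonpos_nonneg)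
      then show False using \<open>int b = k * int m\<close> \<open>0 < int b\<close> by simp
    next
      case False
      then have "1 * int m \<le> k * int m" by (intro mult_right_mono) auto
      then show False using \<open>int b = k * int m\<close> \<open>int b < int m\<close> by linarith
    qed
  qed
  have "(\<Sum>a<m. cis (2 * pi / real m) ^ (b * a)) = (\<Sum>a<m. x ^ a)"
    unfolding x_def by (simp add: power_mult)
  also have "\<dots> = 0" using geometric_sum[OF x1, of m] xm by simp
  finally show ?thesis using False by simp
qed

lemma site_in_basis[simp]: "Site k a \<in> basis N n \<longleftrightarrow> 1 \<le> k \<and> k \<le> N \<and> a < n k"
  unfolding basis_def by auto

lemma kminus_in_basis[simp]: "KMinus \<in> basis N n" and kplus_in_basis[simp]: "KPlus \<in> basis N n"
  unfolding basis_def by auto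

lemma sum_site:
  assumes "1 \<le> k" "k \<le> N" "\<And>j. j \<in> basis N n \<Longrightarrow> j \<notin> Site k ` {..<n k} \<Longrightarrow> f j = 0"
  shows "(\<Sum>j\<in>basis N n. f j) = (\<Sum>a<n k. f (Site k a))"
proof -
  have sub: "Site k ` {..<n k} \<subseteq> basis N n" using assms by auto
  have "(\<Sum>j\<in>basis N n. f j) = (\<Sum>j\<in>Site k ` {..<n k}. f j)"
    by (rule sum.mono_neutral_right[OF fin_basis sub]) (use assms(3) in auto)
  also have "\<dots> = (\<Sum>a<n k. f (Site k a))"
    by (rule sum.reindex_cong[where l="Site k"]) (auto simp: inj_on_def)
  finally show ?thesis .
qed

lemma Z_phi:
  assumes k1: "1 \<le> k" and kN: "k + 1 \<le> N" and nle: "n (k+1) \<le> n k" and n1: "1 \<le> n (k+1)"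
  shows "app N n (Zk N n k) (phi N n k 0) i = ket (Site (k+1) 0) i"
proof (cases i)
  case (Site k1 b)
  show ?thesis
  proof (cases "k1 = k + 1 \<and> b < n (k+1)")
    case True
    then have i: "i = Site (k+1) b" and b: "b < n k" using Site nle by auto
    have nk: "n k > 0" using n1 nle by simp
    have "app N n (Zk N n k) (phi N n k 0) i = (\<Sum>a<n k. Zk N n k i (Site k a) * phi N n k 0 (Site k a))"
      unfolding app_def
      by (rule sum_site) (use k1 kN in \<open>auto simp: i Zk_def split: idx.split\<close>)
    also have "\<dots> = (\<Sum>a<n k. zeta n k ^ (b * a) / complex_of_real (real (n k)))"
    proof (rule sum.cong[OF refl])
      fix a assume "a \<in> {..<n k}"
      then show "Zk N n k i (Site k a) * phi N n k 0 (Site k a) = zeta n k ^ (b * a) / complex_of_real (real (n k))"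
        using True k1 kN nk unfolding i Zk_def phi_def
        by (simp add: field_simps flip: of_real_mult)
    qed
    also have "\<dots> = (\<Sum>a<n k. zeta n k ^ (b * a)) / complex_of_real (real (n k))"
      by (simp add: sum_divide_distrib)
    also have "\<dots> = (if b = 0 then 1 else 0)"
      unfolding zeta_def using root_sum[OF nk b] nk by simp
    also have "\<dots> = ket (Site (k+1) 0) i" unfolding ket_def i by simp
    finally show ?thesis .
  next
    case False
    then have "app N n (Zk N n k) (phi N n k 0) i = 0"
      unfolding app_def Site by (intro sum.neutral) (auto simp: Zk_def split: idx.split)
    moreover have "ket (Site (k+1) 0) i = 0" using False n1 unfolding ket_def Site by auto
    ultimately show ?thesis by simp
  qed
qed (simp_all add: app_def Zk_def ket_def)

lemma Z_ket:
  assumes k1: "1 \<le> k" and kN: "k + 1 \<le> N" and n0: "1 \<le> n k" and n1: "1 \<le> n (k+1)"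
  shows "app N n (Zk N n k) (ket (Site k 0)) i
     = complex_of_real (sqrt (real (n (k+1))) / sqrt (real (n k))) * phi N n (k+1) 0 i"
proof -
  have "app N n (Zk N n k) (ket (Site k 0)) i = Zk N n k i (Site k 0)"
    by (rule app_ket) (use k1 kN n0 in simp)
  also have "\<dots> = complex_of_real (sqrt (real (n (k+1))) / sqrt (real (n k))) * phi N n (k+1) 0 i"
    using k1 kN n0 n1 unfolding Zk_def phi_def
    by (auto split: idx.split simp: field_simps)
  finally show ?thesis .
qed

lemma kerv_scale: "c \<noteq> 0 \<Longrightarrow> kerv N n r (\<lambda>i. c * x i) \<Longrightarrow> kerv N n r x"
  unfolding kerv_def by (simp add: app_scale)

lemma kerv_sum:
  assumes "\<And>k. k \<in> S \<Longrightarrow> kerv N n r (f k)"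
  shows "kerv N n r (\<lambda>i. \<Sum>k\<in>S. f k i)"
  unfolding kerv_def
proof
  fix l assume l: "l \<in> basis N n"
  have "app N n r (\<lambda>i. \<Sum>k\<in>S. f k i) l = (\<Sum>j\<in>basis N n. \<Sum>k\<in>S. r l j * f k j)"
    unfolding app_def by (simp add: sum_distrib_left)
  also have "\<dots> = (\<Sum>k\<in>S. app N n r (f k) l)" unfolding app_def by (rule sum.swap)
  also have "\<dots> = 0" using assms l unfolding kerv_def by simp
  finally show "app N n r (\<lambda>i. \<Sum>k\<in>S. f k i) l = 0" .
qed

lemma app_mscale: "app N n (\<lambda>i j. c * A i j) v = (\<lambda>i. c * app N n A v i)"
  unfolding app_def by (rule ext) (simp add: sum_distrib_left mult.assoc)

lemma kerv_Zk:
  assumes st: "is_state N n r" and inv: "invariant N n G g r" and kv: "kerv N n r v"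
    and Gpos: "\<And>e w. w \<in> freqs N \<Longrightarrow> G e w > 0" and k: "1 \<le> k" "k \<le> N - 1"
  shows "kerv N n r (app N n (Zk N n k) v) \<and> kerv N n r (app N n (adj (Zk N n k)) v)"
proof -
  have w: "Wk k \<in> freqs N" unfolding freqs_def using k by auto
  have m1: "adj (kraus N n G SMinus (Wk k)) = (\<lambda>i j. csqrt_r (G SMinus (Wk k)) * adj (Zk N n k) i j)"
    unfolding kraus_def adj_def csqrt_r_def by simp
  have m2: "adj (kraus N n G SPlus (Wk k)) = (\<lambda>i j. csqrt_r (G SPlus (Wk k)) * Zk N n k i j)"
    unfolding kraus_def adj_def csqrt_r_def by simp
  have a1: "app N n (adj (kraus N n G SMinus (Wk k))) v = (\<lambda>i. csqrt_r (G SMinus (Wk k)) * app N n (adj (Zk N n k)) v i)"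
    unfolding m1 by (rule app_mscale)
  have a2: "app N n (adj (kraus N n G SPlus (Wk k))) v = (\<lambda>i. csqrt_r (G SPlus (Wk k)) * app N n (Zk N n k) v i)"
    unfolding m2 by (rule app_mscale)
  have c1: "csqrt_r (G SMinus (Wk k)) \<noteq> 0" using Gpos[OF w, of SMinus] unfolding csqrt_r_def by simp
  have c2: "csqrt_r (G SPlus (Wk k)) \<noteq> 0" using Gpos[OF w, of SPlus] unfolding csqrt_r_def by simp
  have "kerv N n r (\<lambda>i. csqrt_r (G SMinus (Wk k)) * app N n (adj (Zk N n k)) v i)"
    using key[OF st inv kv w, of SMinus] unfolding a1 by simp
  then have r1: "kerv N n r (app N n (adj (Zk N n k)) v)" by (rule kerv_scale[OF c1])
  have "kerv N n r (\<lambda>i. csqrt_r (G SPlus (Wk k)) * app N n (Zk N n k) v i)"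
    using key[OF st inv kv w, of SPlus] unfolding a2 by simp
  then have r2: "kerv N n r (app N n (Zk N n k) v)" by (rule kerv_scale[OF c2])
  show ?thesis using r1 r2 by simp
qed

lemma kerv_Ztr:
  assumes st: "is_state N n r" and inv: "invariant N n G g r" and kv: "kerv N n r v"
    and Gpos: "\<And>e w. w \<in> freqs N \<Longrightarrow> G e w > 0"
  shows "kerv N n r (app N n (Ztr N n) v) \<and> kerv N n r (app N n (adj (Ztr N n)) v)"
proof -
  have e1: "app N n (Ztr N n) v = (\<lambda>i. \<Sum>k\<in>{1..N-1}. app N n (Zk N n k) v i)"
    unfolding app_def Ztr_def by (rule ext) (simp add: sum_distrib_right, rule sum.swap)
  have e2: "app N n (adj (Ztr N n)) v = (\<lambda>i. \<Sum>k\<in>{1..N-1}. app N n (adj (Zk N n k)) v i)"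
    unfolding app_def Ztr_def adj_def by (rule ext) (simp add: sum_distrib_right, rule sum.swap)
  have Z: "kerv N n r (app N n (Zk N n k) v) \<and> kerv N n r (app N n (adj (Zk N n k)) v)"
    if "k \<in> {1..N-1}" for k
    using that by (intro kerv_Zk[OF st inv kv Gpos]) auto
  show ?thesis unfolding e1 e2
    by (intro conjI kerv_sum) (simp_all add: Z)
qed

theorem proposition3p11:
  fixes N :: nat and n :: "nat \<Rightarrow> nat"
    and G g :: "sign \<Rightarrow> freq \<Rightarrow> real" and \<rho> :: op
  assumes "N \<ge> 2"
    and "\<And>k. 1 \<le> k \<Longrightarrow> k < N \<Longrightarrow> n (k + 1) \<le> n k"
    and "\<And>k. 1 \<le> k \<Longrightarrow> k \<le> N \<Longrightarrow> 1 \<le> n k"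
    and "\<And>e w. w \<in> freqs N \<Longrightarrow> G e w > 0"
    and "is_state N n \<rho>"
    and "invariant N n G g \<rho>"
    and "supported_on N n \<rho> (Omega N n)"
  shows "supported_on N n \<rho> (Vsp N n)"
proof -
  note N2 = assms(1) and nmono = assms(2) and npos = assms(3) and Gpos = assms(4)
    and st = assms(5) and inv = assms(6) and sup = assms(7)
  have h: "herm N n \<rho>" by (rule herm_of_state[OF st])
  have op: "is_operator N n \<rho>" using st unfolding is_state_def by simp
  have om: "inner_h N n s (app N n \<rho> x) = 0"
    if "s \<in> {ket KMinus, ket KPlus, phi N n 1 0, phi N n N 0}" "x \<in> hspace N n" for s x
    using sup that unfolding supported_on_def Omega_def perp_def by blast
  have k1: "kerv N n \<rho> (phi N n 1 0)" by (rule kerv_of_perp[OF h]) (rule om, auto)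
  have kN: "kerv N n \<rho> (phi N n N 0)" by (rule kerv_of_perp[OF h]) (rule om, auto)
  have clZ: "kerv N n \<rho> (app N n (Ztr N n) v)" "kerv N n \<rho> (app N n (adj (Ztr N n)) v)"
    if "kerv N n \<rho> v" for v
    using kerv_Ztr[OF st inv that Gpos] by auto
  have s1: "kerv N n \<rho> ((app N n (Ztr N n) ^^ m) (phi N n 1 0))" for m
    by (induction m) (simp_all only: funpow.simps id_apply o_apply k1 clZ)
  have s2: "kerv N n \<rho> ((app N n (adj (Ztr N n)) ^^ m) v)" if "kerv N n \<rho> v" for m v
    by (induction m) (simp_all add: that clZ)
  have odd: "2 * m + 1 \<le> N \<longrightarrow> kerv N n \<rho> (phi N n (2 * m + 1) 0)" for m
  proof (induction m)
    case 0 show ?case by (intro impI) (simp only: mult_0_right add_0 k1)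
  next
    case (Suc m)
    show ?case
    proof
      assume le: "2 * Suc m + 1 \<le> N"
      define k where "k = 2 * m + 1"
      have kk: "1 \<le> k" "k + 2 \<le> N" using le by (auto simp: k_def)
      have kv: "kerv N n \<rho> (phi N n k 0)" using Suc le unfolding k_def by simp
      have "kerv N n \<rho> (app N n (Zk N n k) (phi N n k 0))"
        using kerv_Zk[OF st inv kv Gpos, of k] kk by auto
      moreover have "app N n (Zk N n k) (phi N n k 0) = ket (Site (k+1) 0)"
        by (rule ext, rule Z_phi) (use kk nmono npos in auto)
      ultimately have kv2: "kerv N n \<rho> (ket (Site (k+1) 0))" by simp
      have "kerv N n \<rho> (app N n (Zk N n (k+1)) (ket (Site (k+1) 0)))"
        using kerv_Zk[OF st inv kv2 Gpos, of "k+1"] kk by auto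
      moreover have "app N n (Zk N n (k+1)) (ket (Site (k+1) 0))
          = (\<lambda>i. complex_of_real (sqrt (real (n (k+2))) / sqrt (real (n (k+1)))) * phi N n (k+2) 0 i)"
        by (rule ext, subst Z_ket) (use kk npos in auto)
      ultimately have "kerv N n \<rho> (\<lambda>i. complex_of_real (sqrt (real (n (k+2))) / sqrt (real (n (k+1)))) * phi N n (k+2) 0 i)"
        by simp
      moreover have "complex_of_real (sqrt (real (n (k+2))) / sqrt (real (n (k+1)))) \<noteq> 0"
        using npos[of "k+2"] npos[of "k+1"] kk by auto
      ultimately have "kerv N n \<rho> (phi N n (k+2) 0)" using kerv_scale by blast
      then show "kerv N n \<rho> (phi N n (2 * Suc m + 1) 0)" by (simp add: k_def)
    qed
  qed
  show ?thesis
    unfolding supported_on_def Vsp_def perp_def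
  proof (intro ballI CollectI conjI)
    fix x assume x: "x \<in> hspace N n"
    show "app N n \<rho> x \<in> hspace N n"
      using op unfolding hspace_def is_operator_def app_def by simp
    fix s assume "s \<in> {(app N n (Ztr N n) ^^ m) (phi N n 1 0) | m. m \<le> N - 1}
     \<union> {(app N n (adj (Ztr N n)) ^^ m) (phi N n N 0) | m. m \<le> N - 1}
     \<union> {(app N n (adj (Ztr N n)) ^^ s) (phi N n (2 * m + 1) 0) | m s.
           1 \<le> m \<and> 2 * m + 1 \<le> N \<and> 1 \<le> s \<and> s \<le> 2 * m}"
    then have "kerv N n \<rho> s" using s1 s2[OF kN] s2 odd by auto
    then show "inner_h N n s (app N n \<rho> x) = 0" by (rule kerv_inner[OF h])
  qed
qed

end
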